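(* Let $G$ be a group with neutral element $e$ and let $A=\bigoplus_{g\in G}A_g$ be a strongly $G$-graded algebra ($A_gA_h=A_{gh}$) with $A_e=\mathbb{C}$ and each $A_g$ one-dimensional (equivalently, a $\mathbb{C}[G]$-Galois object). Choose $0\neq u_g\in A_g$ for each $g$, and let $\lambda:G\times G\to\mathbb{C}^\times$ be defined by $u_gu_h=\lambda(g,h)u_{gh}$ (a 2-cocycle). Then $\Lambda(g,h):=\lambda(g,h)\lambda(h^{-1},g^{-1})$ is trivial in $H^2(G,\mathbb{C}^\times)$, i.e. there is a map $\mu:G\to\mathbb{C}^\times$ with $\Lambda(g,h)=\mu(g)\mu(h)\mu(gh)^{-1}$ for all $g,h\in G$.
   Context: $H^2(G,\mathbb{C}^\times)$ is the second group cohomology of $G$ with coefficients in $\mathbb{C}^\times$ (trivial action): 2-cocycles are maps $\lambda:G\times G\to\mathbb{C}^\times$ with $\lambda(g,h)\lambda(gh,k)=\lambda(h,k)\lambda(g,hk)$, modulo coboundaries $(g,h)\mapsto\mu(g)\mu(h)\mu(gh)^{-1}$. *)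

theory Defs
  imports Complex_Main "HOL-Algebra.Group"
begin

text \<open>A unital associative complex algebra is modelled as a ring 'a together with a
  central injective unital ring homomorphism phi from the complex numbers
  (scalar multiplication c.x is phi c * x).\<close>

definition complex_algebra_emb :: "(complex \<Rightarrow> 'a::ring_1) \<Rightarrow> bool" where
  "complex_algebra_emb phi \<longleftrightarrow>
     inj phi \<and> phi 1 = 1 \<and>
     (\<forall>a b. phi (a + b) = phi a + phi b) \<and>
     (\<forall>a b. phi (a * b) = phi a * phi b) \<and>
     (\<forall>c x. phi c * x = x * phi c)"

definition prod_span :: "('a::ring_1) set \<Rightarrow> 'a set \<Rightarrow> 'a set" where
  "prod_span X Y = {(\<Sum>i<n. x i * y i) | (n::nat) x y. \<forall>i<n. x i \<in> X \<and> y i \<in> Y}"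

definition strongly_graded_Galois ::
  "('g, 'm) monoid_scheme \<Rightarrow> (complex \<Rightarrow> 'a::ring_1) \<Rightarrow> ('g \<Rightarrow> 'a set) \<Rightarrow> bool" where
  "strongly_graded_Galois G phi A \<longleftrightarrow>
     complex_algebra_emb phi \<and>
     \<comment> \<open>each A g is a complex subspace\<close>
     (\<forall>g\<in>carrier G. 0 \<in> A g \<and> (\<forall>x\<in>A g. \<forall>y\<in>A g. x + y \<in> A g)
                      \<and> (\<forall>c. \<forall>x\<in>A g. phi c * x \<in> A g)) \<and>
     \<comment> \<open>A is the (internal) direct sum of the A g\<close>
     (\<forall>a::'a. \<exists>!c::'g \<Rightarrow> 'a. (\<forall>g\<in>carrier G. c g \<in> A g) \<and> (\<forall>g. g \<notin> carrier G \<longrightarrow> c g = 0)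
              \<and> finite {g. c g \<noteq> 0} \<and> a = (\<Sum>g\<in>{g. c g \<noteq> 0}. c g)) \<and>
     \<comment> \<open>strong grading\<close>
     (\<forall>g\<in>carrier G. \<forall>h\<in>carrier G. prod_span (A g) (A h) = A (g \<otimes>\<^bsub>G\<^esub> h)) \<and>
     \<comment> \<open>A_e = C\<close>
     A \<one>\<^bsub>G\<^esub> = range phi \<and>
     \<comment> \<open>each A g is one-dimensional\<close>
     (\<forall>g\<in>carrier G. \<exists>v\<in>A g. v \<noteq> 0 \<and> A g = {phi c * v | c. True})"

end

theory Submission
  imports Defs
begin

theorem lemma4p6:
  fixes G :: "('g, 'm) monoid_scheme"
    and phi :: "complex \<Rightarrow> 'a::ring_1"
    and A :: "'g \<Rightarrow> 'a set"
    and u :: "'g \<Rightarrow> 'a"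
    and lam :: "'g \<Rightarrow> 'g \<Rightarrow> complex"
  assumes "group G"
    and "strongly_graded_Galois G phi A"
    and "\<forall>g\<in>carrier G. u g \<in> A g \<and> u g \<noteq> 0"
    and "\<forall>g\<in>carrier G. \<forall>h\<in>carrier G. u g * u h = phi (lam g h) * u (g \<otimes>\<^bsub>G\<^esub> h)"
  shows "\<exists>\<mu>::'g \<Rightarrow> complex. (\<forall>g\<in>carrier G. \<mu> g \<noteq> 0) \<and>
           (\<forall>g\<in>carrier G. \<forall>h\<in>carrier G.
              lam g h * lam (inv\<^bsub>G\<^esub> h) (inv\<^bsub>G\<^esub> g) = \<mu> g * \<mu> h / \<mu> (g \<otimes>\<^bsub>G\<^esub> h))"
proof -
  interpret group G by fact
  have emb: "complex_algebra_emb phi"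
    using assms(2) unfolding strongly_graded_Galois_def by blast
  have grad: "\<forall>g\<in>carrier G. \<forall>h\<in>carrier G. prod_span (A g) (A h) = A (g \<otimes>\<^bsub>G\<^esub> h)"
    using assms(2) unfolding strongly_graded_Galois_def by blast
  have Ae: "A \<one>\<^bsub>G\<^esub> = range phi"
    using assms(2) unfolding strongly_graded_Galois_def by blast
  have dim: "\<forall>g\<in>carrier G. \<exists>v\<in>A g. v \<noteq> 0 \<and> A g = {phi c * v | c. True}"
    using assms(2) unfolding strongly_graded_Galois_def by blast
  have inj: "inj phi" and p1: "phi 1 = 1" and padd: "\<And>a b. phi (a + b) = phi a + phi b"
    and pmul: "\<And>a b. phi (a * b) = phi a * phi b" and pcomm: "\<And>c x. phi c * x = x * phi c"
    using emb unfolding complex_algebra_emb_def by blast+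
  have p0: "phi 0 = 0" using padd[of 0 0] by simp
  have u: "\<And>g. g \<in> carrier G \<Longrightarrow> u g \<in> A g \<and> u g \<noteq> 0" using assms(3) by auto
  have uu: "\<And>g h. g \<in> carrier G \<Longrightarrow> h \<in> carrier G \<Longrightarrow> u g * u h = phi (lam g h) * u (g \<otimes>\<^bsub>G\<^esub> h)"
    using assms(4) by auto
  have span: "\<exists>a. x = phi a * u g" if g: "g \<in> carrier G" and x: "x \<in> A g" for g x
  proof -
    obtain v where v: "v \<in> A g" "v \<noteq> 0" "A g = {phi c * v | c. True}" using dim g by auto
    obtain c0 where c0: "u g = phi c0 * v" using u[OF g] v(3) by auto
    have "c0 \<noteq> 0" using c0 u[OF g] p0 by auto
    obtain a where a: "x = phi a * v" using x v(3) by auto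
    have "phi (a / c0) * u g = phi (a / c0 * c0) * v" using c0 by (simp only: pmul mult.assoc)
    also have "\<dots> = x" using a \<open>c0 \<noteq> 0\<close> by simp
    finally show ?thesis by metis
  qed
  have nz: "lam k (inv\<^bsub>G\<^esub> k) \<noteq> 0" if k: "k \<in> carrier G" for k
  proof
    assume l0: "lam k (inv\<^bsub>G\<^esub> k) = 0"
    have ki: "inv\<^bsub>G\<^esub> k \<in> carrier G" using k by simp
    have z: "u k * u (inv\<^bsub>G\<^esub> k) = 0" using uu[OF k ki] l0 p0 by simp
    have xy: "x * y = 0" if xa: "x \<in> A k" and ya: "y \<in> A (inv\<^bsub>G\<^esub> k)" for x y
    proof -
      obtain a where a: "x = phi a * u k" using span[OF k xa] by auto
      obtain b where b: "y = phi b * u (inv\<^bsub>G\<^esub> k)" using span[OF ki ya] by auto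
      have "x * y = phi a * (u k * phi b) * u (inv\<^bsub>G\<^esub> k)" using a b by (simp add: mult.assoc)
      also have "\<dots> = phi a * phi b * (u k * u (inv\<^bsub>G\<^esub> k))" unfolding pcomm[of b "u k", symmetric] by (simp add: mult.assoc)
      finally show ?thesis using z by simp
    qed
    have "1 \<in> A \<one>\<^bsub>G\<^esub>" using Ae p1 by (metis rangeI)
    hence "1 \<in> prod_span (A k) (A (inv\<^bsub>G\<^esub> k))" using grad k ki by (metis r_inv)
    then obtain n :: nat and x y :: "nat \<Rightarrow> 'a" where s: "(1::'a) = (\<Sum>i<n. x i * y i)" and xy': "\<forall>i<n. x i \<in> A k \<and> y i \<in> A (inv\<^bsub>G\<^esub> k)"
      unfolding prod_span_def by blast
    have "(\<Sum>i<n. x i * y i) = (0::'a)" using xy xy' by (intro sum.neutral) auto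
    hence "phi 1 = phi 0" using s p1 p0 by simp
    thus False using inj by (simp add: inj_eq)
  qed
  obtain c where uc: "u \<one>\<^bsub>G\<^esub> = phi c" using u[of "\<one>\<^bsub>G\<^esub>"] Ae by auto
  have "c \<noteq> 0" using uc u[of "\<one>\<^bsub>G\<^esub>"] p0 by auto
  define mu where "mu k = lam k (inv\<^bsub>G\<^esub> k) * c" for k
  have muz: "\<forall>g\<in>carrier G. mu g \<noteq> 0" using nz \<open>c \<noteq> 0\<close> by (simp add: mu_def)
  have uinv: "u k * u (inv\<^bsub>G\<^esub> k) = phi (mu k)" if "k \<in> carrier G" for k
    using uu[of k "inv\<^bsub>G\<^esub> k"] that uc by (simp add: mu_def pmul)
  have main: "lam g h * lam (inv\<^bsub>G\<^esub> h) (inv\<^bsub>G\<^esub> g) * mu (g \<otimes>\<^bsub>G\<^esub> h) = mu g * mu h"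
    if g: "g \<in> carrier G" and h: "h \<in> carrier G" for g h
  proof -
    have gi: "inv\<^bsub>G\<^esub> g \<in> carrier G" and hi: "inv\<^bsub>G\<^esub> h \<in> carrier G" and gh: "g \<otimes>\<^bsub>G\<^esub> h \<in> carrier G"
      using g h by auto
    have ih: "inv\<^bsub>G\<^esub> h \<otimes>\<^bsub>G\<^esub> inv\<^bsub>G\<^esub> g = inv\<^bsub>G\<^esub> (g \<otimes>\<^bsub>G\<^esub> h)" using g h by (simp add: inv_mult_group)
    have "(u g * u h) * (u (inv\<^bsub>G\<^esub> h) * u (inv\<^bsub>G\<^esub> g))
       = phi (lam g h) * (u (g \<otimes>\<^bsub>G\<^esub> h) * phi (lam (inv\<^bsub>G\<^esub> h) (inv\<^bsub>G\<^esub> g))) * u (inv\<^bsub>G\<^esub> (g \<otimes>\<^bsub>G\<^esub> h))"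
      using uu[OF g h] uu[OF hi gi] ih by (simp add: mult.assoc)
    also have "\<dots> = phi (lam g h) * phi (lam (inv\<^bsub>G\<^esub> h) (inv\<^bsub>G\<^esub> g)) * (u (g \<otimes>\<^bsub>G\<^esub> h) * u (inv\<^bsub>G\<^esub> (g \<otimes>\<^bsub>G\<^esub> h)))"
      unfolding pcomm[of "lam (inv\<^bsub>G\<^esub> h) (inv\<^bsub>G\<^esub> g)" "u (g \<otimes>\<^bsub>G\<^esub> h)", symmetric] by (simp add: mult.assoc)
    also have "\<dots> = phi (lam g h * lam (inv\<^bsub>G\<^esub> h) (inv\<^bsub>G\<^esub> g) * mu (g \<otimes>\<^bsub>G\<^esub> h))"
      using uinv[OF gh] by (simp add: pmul)
    finally have L: "(u g * u h) * (u (inv\<^bsub>G\<^esub> h) * u (inv\<^bsub>G\<^esub> g)) = phi (lam g h * lam (inv\<^bsub>G\<^esub> h) (inv\<^bsub>G\<^esub> g) * mu (g \<otimes>\<^bsub>G\<^esub> h))" .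
    have "(u g * u h) * (u (inv\<^bsub>G\<^esub> h) * u (inv\<^bsub>G\<^esub> g)) = u g * (u h * u (inv\<^bsub>G\<^esub> h)) * u (inv\<^bsub>G\<^esub> g)"
      by (simp add: mult.assoc)
    also have "\<dots> = u g * phi (mu h) * u (inv\<^bsub>G\<^esub> g)" using uinv[OF h] by simp
    also have "\<dots> = phi (mu h) * (u g * u (inv\<^bsub>G\<^esub> g))" unfolding pcomm[of "mu h" "u g", symmetric] by (simp add: mult.assoc)
    also have "\<dots> = phi (mu g * mu h)" using uinv[OF g] by (simp add: pmul[symmetric] mult.commute)
    finally show ?thesis using L inj by (simp add: inj_eq)
  qed
  show ?thesis
  proof (intro exI[of _ mu] conjI ballI)
    fix g assume "g \<in> carrier G" thus "mu g \<noteq> 0" using muz by auto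
  next
    fix g h assume g: "g \<in> carrier G" and h: "h \<in> carrier G"
    have "mu (g \<otimes>\<^bsub>G\<^esub> h) \<noteq> 0" using muz g h by auto
    thus "lam g h * lam (inv\<^bsub>G\<^esub> h) (inv\<^bsub>G\<^esub> g) = mu g * mu h / mu (g \<otimes>\<^bsub>G\<^esub> h)"
      using main[OF g h] by (simp add: field_simps)
  qed
qed

end
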